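(* Fix $b,c,d\in\mathbb C$ with $|c|<1$ and $|d|<1$. Define $f\colon\mathbb R^2\to\mathbb R$ by \[ f(x,y)=\Re\left[\frac{2(x+iy)\overline b+(x+iy)^2\overline d+\overline{b^2}c}{1-c\overline d}-\frac{|x+iy|^2+(x+iy)^2\overline c}{1-|c|^2}-\frac{|b|^2+\overline{b^2}d}{1-|d|^2}\right]. \] Then $f$ has a unique critical point $(x_0,y_0)$, which satisfies \[ x_0+iy_0=\frac{\overline b(d-c)+b(1-c\overline d)}{1-|d|^2}, \] and $\sup_{(x,y)\in\mathbb R^2}f(x,y)=f(x_0,y_0)=0$. *)

theory Defs
  imports "HOL-Analysis.Analysis"
begin

definition f5p4 :: "complex \<Rightarrow> complex \<Rightarrow> complex \<Rightarrow> real \<times> real \<Rightarrow> real" where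
  "f5p4 b c d p = (let z = Complex (fst p) (snd p) in
     Re ((2 * z * cnj b + z^2 * cnj d + cnj (b^2) * c) / (1 - c * cnj d)
         - (complex_of_real ((cmod z)^2) + z^2 * cnj c) / complex_of_real (1 - (cmod c)^2)
         - (complex_of_real ((cmod b)^2) + cnj (b^2) * d) / complex_of_real (1 - (cmod d)^2)))"

definition critical_point :: "(real \<times> real \<Rightarrow> real) \<Rightarrow> real \<times> real \<Rightarrow> bool" where
  "critical_point g p \<longleftrightarrow> (g has_derivative (\<lambda>_. 0)) (at p)"

end

theory Submission
  imports Defs
begin
lemma alg0:
  fixes z zb b bb c cb d db e1 e2 e3 e4 :: complex
  assumes h1: "e1*(1 - c*db) = 1" and h2: "e2*(1-cb*d) = 1" and h3: "e3*(1-c*cb) = 1" and h4: "e4*(1-d*db) = 1"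
  shows "((2*z*bb+z^2*db+bb^2*c)*e1-(z*zb+z^2*cb)*e3-(b*bb+bb^2*d)*e4)
   + ((2*zb*b+zb^2*d+b^2*cb)*e2-(z*zb+zb^2*c)*e3-(b*bb+b^2*db)*e4)
   = (db-cb)*(e1*e3) * (z - (bb*(d-c)+b*(1-c*db))*e4)^2
   + (d-c)*(e2*e3) * (zb - (b*(db-cb)+bb*(1-cb*d))*e4)^2
   - 2*(z - (bb*(d-c)+b*(1-c*db))*e4)*(zb - (b*(db-cb)+bb*(1-cb*d))*e4)*e3"
  using assms by algebra

lemma alg:
  fixes z zb b bb c cb d db :: complex
  assumes h1: "1 - c*db \<noteq> 0" and h2: "1-cb*d \<noteq> 0" and h3: "1-c*cb \<noteq> 0" and h4: "1-d*db\<noteq>0"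
  shows "((2*z*bb+z^2*db+bb^2*c)/(1-c*db)-(z*zb+z^2*cb)/(1-c*cb)-(b*bb+bb^2*d)/(1-d*db))
   + ((2*zb*b+zb^2*d+b^2*cb)/(1-cb*d)-(z*zb+zb^2*c)/(1-c*cb)-(b*bb+b^2*db)/(1-d*db))
   = (db-cb)/((1-c*db)*(1-c*cb)) * (z - (bb*(d-c)+b*(1-c*db))/(1-d*db))^2
   + (d-c)/((1-cb*d)*(1-c*cb)) * (zb - (b*(db-cb)+bb*(1-cb*d))/(1-d*db))^2
   - 2*(z - (bb*(d-c)+b*(1-c*db))/(1-d*db))*(zb - (b*(db-cb)+bb*(1-cb*d))/(1-d*db))/(1-c*cb)"
  unfolding divide_inverse inverse_mult_distrib
  by (rule alg0) (use assms in auto)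

lemma key:
  fixes b c d :: complex
  assumes "cmod c < 1" and "cmod d < 1"
  defines "z0 \<equiv> (cnj b * (d - c) + b * (1 - c * cnj d)) / complex_of_real (1 - (cmod d)^2)"
  defines "al \<equiv> (cnj d - cnj c)/((1-c*cnj d)*complex_of_real (1 - (cmod c)^2))"
  shows "f5p4 b c d p = Re (al * (Complex (fst p) (snd p) - z0)^2) - (cmod (Complex (fst p) (snd p) - z0))^2 / (1 - (cmod c)^2)"
proof -
  define z where "z = Complex (fst p) (snd p)"
  have sq: "\<And>x. (complex_of_real (cmod x))^2 = x * cnj x" by (metis complex_norm_square of_real_power)
  have nc: "1 - c * cnj c \<noteq> 0"
  proof -
    have "cmod c ^2 < 1" using assms(1)
      by (smt (verit, del_insts) norm_eq_zero power2_less_1_iff zero_less_norm_iff)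
    then have "1 - cmod c ^2 \<noteq> 0" by simp
    then have "complex_of_real (1 - cmod c ^2) \<noteq> 0" by (metis of_real_eq_0_iff)
    then show ?thesis by (metis of_real_diff of_real_1 complex_norm_square)
  qed
  have nd: "1 - d * cnj d \<noteq> 0"
  proof -
    have "cmod d ^2 < 1" using assms(2)
      by (smt (verit, del_insts) norm_eq_zero power2_less_1_iff zero_less_norm_iff)
    then have "1 - cmod d ^2 \<noteq> 0" by simp
    then have "complex_of_real (1 - cmod d ^2) \<noteq> 0" by (metis of_real_eq_0_iff)
    then show ?thesis by (metis of_real_diff of_real_1 complex_norm_square)
  qed
  have m: "cmod c * cmod d < 1" using assms
    by (smt (verit, ccfv_SIG) mult_eq_1 mult_le_one norm_ge_zero)
  have ncd: "1 - c * cnj d \<noteq> 0"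
  proof
    assume "1 - c * cnj d = 0"
    then have "cmod (c * cnj d) = 1" by (metis eq_iff_diff_eq_0 norm_one)
    then show False using m by (simp add: norm_mult)
  qed
  have ncd': "1 - cnj c * d \<noteq> 0"
  proof
    assume "1 - cnj c * d = 0"
    then have "cmod (cnj c * d) = 1" by (metis eq_iff_diff_eq_0 norm_one)
    then show False using m by (simp add: norm_mult)
  qed
  have e1: "complex_of_real (1 - (cmod c)^2) = 1 - c * cnj c" by (simp only: of_real_diff of_real_1 complex_norm_square)
  have e2: "complex_of_real (1 - (cmod d)^2) = 1 - d * cnj d" by (simp only: of_real_diff of_real_1 complex_norm_square)
  have "complex_of_real (2 * f5p4 b c d p) = complex_of_real (2 * (Re (al * (z - z0)^2) - (cmod (z - z0))^2 / (1 - (cmod c)^2)))"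
  proof -
    have "complex_of_real (2 * f5p4 b c d p) = 
      ((2*z*cnj b+z^2*cnj d+cnj b^2*c)/(1-c*cnj d)-(z*cnj z+z^2*cnj c)/(1-c*cnj c)-(b*cnj b+cnj b^2*d)/(1-d*cnj d))
   + ((2*cnj z*b+cnj z^2*d+b^2*cnj c)/(1-cnj c*d)-(z*cnj z+cnj z^2*c)/(1-c*cnj c)-(b*cnj b+b^2*cnj d)/(1-d*cnj d))"
      unfolding f5p4_def z_def[symmetric] Let_def complex_add_cnj[symmetric] e1 e2
      by (simp add: sq mult.commute)
    also have "\<dots> = complex_of_real (2 * (Re (al * (z - z0)^2) - (cmod (z - z0))^2 / (1 - (cmod c)^2)))"
    proof -
      have h1: "complex_of_real (2*Re (al*(z-z0)^2)) = al*(z-z0)^2 + cnj (al*(z-z0)^2)"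
        by (rule complex_add_cnj[symmetric])
      have h2: "complex_of_real ((cmod (z-z0))^2 / (1 - (cmod c)^2)) = (z-z0) * cnj (z-z0) / (1 - c*cnj c)"
        by (simp only: of_real_divide e1 complex_norm_square)
      have h3: "complex_of_real (2 * (Re (al * (z - z0)^2) - (cmod (z - z0))^2 / (1 - (cmod c)^2)))
         = complex_of_real (2*Re (al*(z-z0)^2)) - 2 * complex_of_real ((cmod (z-z0))^2 / (1 - (cmod c)^2))"
        by (simp add: algebra_simps)
      show ?thesis apply (rule trans[OF alg[OF ncd ncd' nc nd]])
        unfolding h3 h1 h2 unfolding al_def z0_def e1 e2
        by (simp add: mult.commute mult.left_commute)
    qed
    finally show ?thesis .
  qed
  then show ?thesis unfolding z_def by (metis mult_cancel_left of_real_eq_iff zero_neq_numeral)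
qed

lemma sqc: "(complex_of_real (cmod x))^2 = x * cnj x" by (metis complex_norm_square of_real_power)

lemma derivQ: fixes al z0 K :: complex shows
 "((\<lambda>p. Re (al*(Complex (fst p) (snd p)-z0)*(Complex (fst p) (snd p)-z0) - K*((Complex (fst p) (snd p)-z0)*cnj(Complex (fst p) (snd p)-z0)))) has_derivative
  (\<lambda>h. Re (al*(Complex (fst h) (snd h)*(Complex (fst p) (snd p)-z0) + (Complex (fst p) (snd p)-z0)*Complex (fst h) (snd h))
     - K*(Complex (fst h) (snd h)*cnj(Complex (fst p) (snd p)-z0) + (Complex (fst p) (snd p)-z0)*cnj (Complex (fst h) (snd h)))))) (at p)"
  unfolding Complex_eq
  apply (rule has_derivative_eq_rhs)
   apply (rule derivative_intros)+
  apply (rule ext)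
  apply (simp add: algebra_simps)
  done

theorem lemma5p4:
  fixes b c d :: complex
  assumes "cmod c < 1" and "cmod d < 1"
  shows "\<exists>x0 y0.
           (\<forall>p. critical_point (f5p4 b c d) p \<longleftrightarrow> p = (x0, y0)) \<and>
           Complex x0 y0 = (cnj b * (d - c) + b * (1 - c * cnj d)) / complex_of_real (1 - (cmod d)^2) \<and>
           (\<forall>p. f5p4 b c d p \<le> f5p4 b c d (x0, y0)) \<and>
           (SUP p. f5p4 b c d p) = f5p4 b c d (x0, y0) \<and>
           f5p4 b c d (x0, y0) = 0"
proof -
  define z0 where "z0 \<equiv> (cnj b * (d - c) + b * (1 - c * cnj d)) / complex_of_real (1 - (cmod d)^2)"
  define al where "al \<equiv> (cnj d - cnj c)/((1-c*cnj d)*complex_of_real (1 - (cmod c)^2))"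
  define Dc where "Dc = 1 - (cmod c)^2"
  define Dd where "Dd = 1 - (cmod d)^2"
  define K where "K = complex_of_real (1/Dc)"
  define C where "C = (\<lambda>p::real\<times>real. Complex (fst p) (snd p))"
  define Q where "Q = (\<lambda>w. Re (al*w*w - K*(w*cnj w)))"
  have Dc: "Dc > 0" unfolding Dc_def using assms(1)
    by (smt (verit, del_insts) norm_eq_zero power2_less_1_iff zero_less_norm_iff)
  have Dd: "Dd > 0" unfolding Dd_def using assms(2)
    by (smt (verit, del_insts) norm_eq_zero power2_less_1_iff zero_less_norm_iff)
  have Qalt: "Q w = Re (al * w^2) - (cmod w)^2 / Dc" for w
  proof -
    have "K*(w*cnj w) = complex_of_real ((cmod w)^2 / Dc)"
      unfolding K_def by (simp add: sqc)
    then have 1: "Re (K*(w*cnj w)) = (cmod w)^2 / Dc" by simp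
    have 2: "al*w*w = al*w^2" by (simp add: power2_eq_square mult.assoc)
    show ?thesis unfolding Q_def minus_complex.sel 1 2 ..
  qed
  have hf: "f5p4 b c d p = Q (C p - z0)" for p
    unfolding Qalt C_def Dc_def using key[OF assms, of b p] unfolding z0_def al_def .
  have lt: "cmod (d - c) < cmod (1 - c * cnj d)"
  proof -
    have "complex_of_real ((cmod (1 - c * cnj d))^2 - (cmod (d - c))^2) = complex_of_real (Dc * Dd)"
      unfolding Dc_def Dd_def of_real_diff of_real_mult of_real_1 complex_norm_square
      unfolding complex_cnj_diff complex_cnj_mult complex_cnj_cnj complex_cnj_one
      by algebra
    then have "(cmod (1 - c * cnj d))^2 - (cmod (d - c))^2 = Dc * Dd" by (metis of_real_eq_iff)
    then have "(cmod (d - c))^2 < (cmod (1 - c * cnj d))^2" using Dc Dd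
      by (smt (verit) mult_pos_pos)
    then show ?thesis by (metis norm_ge_zero power2_less_imp_less)
  qed
  have alb: "cmod al < 1 / Dc"
  proof -
    have "cmod al = cmod (d - c) / (cmod (1 - c * cnj d) * Dc)"
      unfolding al_def Dc_def[symmetric] using Dc
      by (simp add: norm_divide norm_mult complex_cnj_diff[symmetric] del: complex_cnj_diff)
    also have "\<dots> < 1 / Dc" using lt Dc
      by (simp add: divide_simps)
    finally show ?thesis .
  qed
  have Qneg: "Q w < 0" if "w \<noteq> 0" for w
  proof -
    have "Re (al * w^2) \<le> cmod al * (cmod w)^2"
      by (metis complex_Re_le_cmod norm_mult norm_power)
    also have "\<dots> < (1/Dc) * (cmod w)^2"
      using alb that by (intro mult_strict_right_mono) auto
    finally show ?thesis unfolding Qalt by simp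
  qed
  have Q0: "Q 0 = 0" unfolding Q_def by simp
  define L where "L = (\<lambda>w h. Re (al*(C h*w + w*C h) - K*(C h*cnj w + w*cnj (C h))))"
  have der: "(f5p4 b c d has_derivative L (C p - z0)) (at p)" for p
  proof -
    have "f5p4 b c d = (\<lambda>p. Re (al*(C p-z0)*(C p-z0) - K*((C p-z0)*cnj(C p-z0))))"
      using hf unfolding Q_def by auto
    then show ?thesis unfolding L_def C_def using derivQ[of al z0 K p] by simp
  qed
  have LQ: "L w (Re w, Im w) = 2 * Q w" for w
    unfolding L_def Q_def C_def by (simp add: algebra_simps)
  have crit: "critical_point (f5p4 b c d) p \<longleftrightarrow> p = (Re z0, Im z0)" for p
  proof
    assume "critical_point (f5p4 b c d) p"
    then have "L (C p - z0) = (\<lambda>_. 0)" unfolding critical_point_def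
      using der has_derivative_unique by blast
    then have "Q (C p - z0) = 0" using LQ[of "C p - z0"] by (metis mult_eq_0_iff zero_neq_numeral)
    then have "C p = z0" using Qneg by (metis eq_iff_diff_eq_0 less_irrefl)
    then show "p = (Re z0, Im z0)" unfolding C_def by (cases p) auto
  next
    assume "p = (Re z0, Im z0)"
    then have "C p - z0 = 0" unfolding C_def by simp
    then have "L (C p - z0) = (\<lambda>_. 0)" unfolding L_def by simp
    then show "critical_point (f5p4 b c d) p" unfolding critical_point_def using der by metis
  qed
  have fz: "f5p4 b c d (Re z0, Im z0) = 0" using hf Q0 unfolding C_def by simp
  have le: "f5p4 b c d p \<le> f5p4 b c d (Re z0, Im z0)" for p
  proof -
    have "Q (C p - z0) \<le> 0" using Qneg[of "C p - z0"] Q0 by (cases "C p - z0 = 0") auto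
    then show ?thesis using fz hf[of p] by simp
  qed
  have sup: "(SUP p. f5p4 b c d p) = f5p4 b c d (Re z0, Im z0)"
    by (rule cSup_eq_maximum) (use le in auto)
  show ?thesis
    unfolding z0_def[symmetric]
    apply (rule exI[of _ "Re z0"], rule exI[of _ "Im z0"])
    using crit fz le sup by simp
qed
end
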